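(* Let $\mathbb{A}$ be a 2-category and $p:e\to b$ a 1-cell such that $\mathbb{A}$ has the two-dimensional cokernel diagram of $p$, a right Kan extension $(t,\gamma)$ of $p$ along $p$ exists, and it is preserved by $\delta^0:b\to b\uparrow_pb$. Let $(b,t,m,\eta)$ be the codensity monad of $p$, let $\ell:b\uparrow_pb\to b$ be the unique 1-cell with $\ell\delta^0=\mathrm{id}_b$, $\ell\delta^1=t$, $\mathrm{id}_\ell\ast\alpha=\gamma$, and let $\bar\ell:b\uparrow_pb\uparrow_pb\to b$ be the unique 1-cell with $\bar\ell D^0=\ell$ and $\bar\ell D^2=t\ell$. Then there are 2-cells $\theta:s^0\Rightarrow\ell$ and $\lambda:\bar\ell D^1\Rightarrow\ell$ (between 1-cells $b\uparrow_pb\to b$) such that $$\theta\ast\mathrm{id}_{\delta^1}=\eta,\quad \theta\ast\mathrm{id}_{\delta^0}=\mathrm{id}_{\mathrm{id}_b},\quad \lambda\ast\mathrm{id}_{\delta^1}=m,\quad \lambda\ast\mathrm{id}_{\delta^0}=\mathrm{id}_{\mathrm{id}_b}.$$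
   Context: A 2-category is a $\mathbf{Cat}$-enriched category; composition of 1-cells is juxtaposition, vertical composition of 2-cells is $\cdot$, horizontal composition is $\ast$, $\mathrm{id}_f$ is the identity 2-cell on $f$. Opcomma object of $p$ along itself: an object $b\uparrow_p b$ with 1-cells $\delta^0,\delta^1:b\to b\uparrow_p b$ and a 2-cell $\alpha:\delta^1p\Rightarrow\delta^0p$ such that for every object $y$ the functor $h\mapsto(h\delta^0,h\delta^1,\mathrm{id}_h\ast\alpha)$, $\xi\mapsto(\xi\ast\mathrm{id}_{\delta^0},\xi\ast\mathrm{id}_{\delta^1})$ is an isomorphism from $\mathbb{A}(b\uparrow_p b,y)$ onto the category of triples $(h_0,h_1:b\to y,\ \beta:h_1p\Rightarrow h_0p)$ with morphisms pairs of 2-cells $(\xi_0:h_0\Rightarrow h_0',\xi_1:h_1\Rightarrow h_1')$ satisfying $(\xi_0\ast\mathrm{id}_p)\cdot\beta=\beta'\cdot(\xi_1\ast\mathrm{id}_p)$. Two-dimensional pushout of a span $f_0:c\to c_0$, $f_1:c\to c_1$: an object $P$ with $q_0:c_0\to P$, $q_1:c_1\to P$, $q_0f_0=q_1f_1$, such that for every $y$, $k\mapsto(kq_0,kq_1)$ is an isomorphism from $\mathbb{A}(P,y)$ onto the category of pairs $(k_0,k_1)$ with $k_0f_0=k_1f_1$, whose morphisms are pairs of 2-cells $(\xi_0,\xi_1)$ with $\xi_0\ast\mathrm{id}_{f_0}=\xi_1\ast\mathrm{id}_{f_1}$. $\mathbb{A}$ has the two-dimensional cokernel diagram of $p$ if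 it has an opcomma object $b\uparrow_p b$ of $p$ along itself and a two-dimensional pushout $b\uparrow_pb\uparrow_pb$ of the span $(\delta^0,\delta^1)$, with 1-cells $D^0,D^2:b\uparrow_pb\to b\uparrow_pb\uparrow_pb$ satisfying $D^2\delta^0=D^0\delta^1$. Then $D^1$ is the unique 1-cell with $D^1\delta^1=D^2\delta^1$, $D^1\delta^0=D^0\delta^0$, $\mathrm{id}_{D^1}\ast\alpha=(\mathrm{id}_{D^0}\ast\alpha)\cdot(\mathrm{id}_{D^2}\ast\alpha)$, and $s^0:b\uparrow_pb\to b$ is the unique 1-cell with $s^0\delta^0=s^0\delta^1=\mathrm{id}_b$ and $\mathrm{id}_{s^0}\ast\alpha=\mathrm{id}_p$. Right Kan extension of $f:z\to y$ along $g:z\to x$: a pair $(r:x\to y,\gamma:rg\Rightarrow f)$ such that for each $k:x\to y$, $\beta\mapsto\gamma\cdot(\beta\ast\mathrm{id}_g)$ is a bijection from 2-cells $k\Rightarrow r$ to 2-cells $kg\Rightarrow f$; a 1-cell $d$ preserves it if $(dr,\mathrm{id}_d\ast\gamma)$ is a right Kan extension of $df$ along $g$. Codensity monad: if $(t,\gamma)$ is a right Kan extension of $p$ along $p$, then $m:tt\Rightarrow t$ is the unique 2-cell with $\gamma\cdot(m\ast\mathrm{id}_p)=\gamma\cdot(\mathrm{id}_t\ast\gamma)$ and $\eta:\mathrm{id}_b\Rightarrow t$ the unique 2-cell with $\gamma\cdot(\eta\ast\mathrm{id}_p)=\mathrm{id}_p$; $(b,t,m,\eta)$ is a monad, the codensity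 monad of $p$. *)

theory Defs
  imports Main
begin

text \<open>A 2-category with objects of type 'o, 1-cells of type 'a and 2-cells of type 'c.
  cmp1 g f is the composite "g f" (first f, then g); vcmp b a is "b \<cdot> a" (first a);
  hcmp b a is "b \<ast> a"; idt1 x is id_x; idt2 f is id_f.\<close>

record ('o, 'a, 'c) tcat =
  obj  :: "'o set"
  arr1 :: "'a set"
  arr2 :: "'c set"
  dom1 :: "'a \<Rightarrow> 'o"
  cod1 :: "'a \<Rightarrow> 'o"
  cmp1 :: "'a \<Rightarrow> 'a \<Rightarrow> 'a"
  idt1 :: "'o \<Rightarrow> 'a"
  src2 :: "'c \<Rightarrow> 'a"
  tgt2 :: "'c \<Rightarrow> 'a"
  vcmp :: "'c \<Rightarrow> 'c \<Rightarrow> 'c"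
  hcmp :: "'c \<Rightarrow> 'c \<Rightarrow> 'c"
  idt2 :: "'a \<Rightarrow> 'c"

definition two_category :: "('o, 'a, 'c) tcat \<Rightarrow> bool" where
  "two_category A \<longleftrightarrow>
    (\<forall>f\<in>arr1 A. dom1 A f \<in> obj A \<and> cod1 A f \<in> obj A) \<and>
    (\<forall>x\<in>obj A. idt1 A x \<in> arr1 A \<and> dom1 A (idt1 A x) = x \<and> cod1 A (idt1 A x) = x) \<and>
    (\<forall>g\<in>arr1 A. \<forall>f\<in>arr1 A. dom1 A g = cod1 A f \<longrightarrow>
        cmp1 A g f \<in> arr1 A \<and> dom1 A (cmp1 A g f) = dom1 A f \<and> cod1 A (cmp1 A g f) = cod1 A g) \<and>
    (\<forall>h\<in>arr1 A. \<forall>g\<in>arr1 A. \<forall>f\<in>arr1 A. dom1 A h = cod1 A g \<and> dom1 A g = cod1 A f \<longrightarrow>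
        cmp1 A h (cmp1 A g f) = cmp1 A (cmp1 A h g) f) \<and>
    (\<forall>f\<in>arr1 A. cmp1 A (idt1 A (cod1 A f)) f = f \<and> cmp1 A f (idt1 A (dom1 A f)) = f) \<and>
    (\<forall>a\<in>arr2 A. src2 A a \<in> arr1 A \<and> tgt2 A a \<in> arr1 A \<and>
        dom1 A (src2 A a) = dom1 A (tgt2 A a) \<and> cod1 A (src2 A a) = cod1 A (tgt2 A a)) \<and>
    (\<forall>f\<in>arr1 A. idt2 A f \<in> arr2 A \<and> src2 A (idt2 A f) = f \<and> tgt2 A (idt2 A f) = f) \<and>
    (\<forall>b\<in>arr2 A. \<forall>a\<in>arr2 A. src2 A b = tgt2 A a \<longrightarrow>
        vcmp A b a \<in> arr2 A \<and> src2 A (vcmp A b a) = src2 A a \<and> tgt2 A (vcmp A b a) = tgt2 A b) \<and>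
    (\<forall>c\<in>arr2 A. \<forall>b\<in>arr2 A. \<forall>a\<in>arr2 A. src2 A c = tgt2 A b \<and> src2 A b = tgt2 A a \<longrightarrow>
        vcmp A c (vcmp A b a) = vcmp A (vcmp A c b) a) \<and>
    (\<forall>a\<in>arr2 A. vcmp A (idt2 A (tgt2 A a)) a = a \<and> vcmp A a (idt2 A (src2 A a)) = a) \<and>
    (\<forall>b\<in>arr2 A. \<forall>a\<in>arr2 A. dom1 A (src2 A b) = cod1 A (src2 A a) \<longrightarrow>
        hcmp A b a \<in> arr2 A \<and> src2 A (hcmp A b a) = cmp1 A (src2 A b) (src2 A a) \<and>
        tgt2 A (hcmp A b a) = cmp1 A (tgt2 A b) (tgt2 A a)) \<and>
    (\<forall>c\<in>arr2 A. \<forall>b\<in>arr2 A. \<forall>a\<in>arr2 A.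
        dom1 A (src2 A c) = cod1 A (src2 A b) \<and> dom1 A (src2 A b) = cod1 A (src2 A a) \<longrightarrow>
        hcmp A c (hcmp A b a) = hcmp A (hcmp A c b) a) \<and>
    (\<forall>a\<in>arr2 A. hcmp A (idt2 A (idt1 A (cod1 A (src2 A a)))) a = a \<and>
        hcmp A a (idt2 A (idt1 A (dom1 A (src2 A a)))) = a) \<and>
    (\<forall>g\<in>arr1 A. \<forall>f\<in>arr1 A. dom1 A g = cod1 A f \<longrightarrow>
        hcmp A (idt2 A g) (idt2 A f) = idt2 A (cmp1 A g f)) \<and>
    (\<forall>d\<in>arr2 A. \<forall>c\<in>arr2 A. \<forall>b\<in>arr2 A. \<forall>a\<in>arr2 A.
        src2 A d = tgt2 A c \<and> src2 A b = tgt2 A a \<and> dom1 A (src2 A d) = cod1 A (src2 A b) \<longrightarrow>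
        hcmp A (vcmp A d c) (vcmp A b a) = vcmp A (hcmp A d b) (hcmp A c a))"

definition hom :: "('o, 'a, 'c) tcat \<Rightarrow> 'o \<Rightarrow> 'o \<Rightarrow> 'a set" where
  "hom A x y = {f \<in> arr1 A. dom1 A f = x \<and> cod1 A f = y}"

definition cells :: "('o, 'a, 'c) tcat \<Rightarrow> 'o \<Rightarrow> 'o \<Rightarrow> 'c set" where
  "cells A x y = {a \<in> arr2 A. src2 A a \<in> hom A x y \<and> tgt2 A a \<in> hom A x y}"

definition cell :: "('o, 'a, 'c) tcat \<Rightarrow> 'c \<Rightarrow> 'a \<Rightarrow> 'a \<Rightarrow> bool" where
  "cell A a f g \<longleftrightarrow> a \<in> arr2 A \<and> src2 A a = f \<and> tgt2 A a = g"

definition opc_triples :: "('o, 'a, 'c) tcat \<Rightarrow> 'a \<Rightarrow> 'o \<Rightarrow> ('a \<times> 'a \<times> 'c) set" where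
  "opc_triples A p y = {(h0, h1, \<beta>). h0 \<in> hom A (cod1 A p) y \<and> h1 \<in> hom A (cod1 A p) y \<and>
      cell A \<beta> (cmp1 A h1 p) (cmp1 A h0 p)}"

definition opc_morphs :: "('o, 'a, 'c) tcat \<Rightarrow> 'a \<Rightarrow> 'o \<Rightarrow>
    (('a \<times> 'a \<times> 'c) \<times> ('a \<times> 'a \<times> 'c) \<times> 'c \<times> 'c) set" where
  "opc_morphs A p y = {((h0, h1, \<beta>), (h0', h1', \<beta>'), \<xi>0, \<xi>1).
      (h0, h1, \<beta>) \<in> opc_triples A p y \<and> (h0', h1', \<beta>') \<in> opc_triples A p y \<and>
      cell A \<xi>0 h0 h0' \<and> cell A \<xi>1 h1 h1' \<and>
      vcmp A (hcmp A \<xi>0 (idt2 A p)) \<beta> = vcmp A \<beta>' (hcmp A \<xi>1 (idt2 A p))}"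

definition opc_obj_map :: "('o, 'a, 'c) tcat \<Rightarrow> 'a \<Rightarrow> 'a \<Rightarrow> 'c \<Rightarrow> 'a \<Rightarrow> 'a \<times> 'a \<times> 'c" where
  "opc_obj_map A d0 d1 \<alpha> h = (cmp1 A h d0, cmp1 A h d1, hcmp A (idt2 A h) \<alpha>)"

text \<open>(c, d0, d1, alpha) is an opcomma object of p along itself: for every y the functor
  \<open>\<bbbA>(c,y) \<rightarrow> triples\<close> is an isomorphism of categories (bijective on objects and on morphisms).\<close>
definition is_opcomma :: "('o, 'a, 'c) tcat \<Rightarrow> 'a \<Rightarrow> 'o \<Rightarrow> 'a \<Rightarrow> 'a \<Rightarrow> 'c \<Rightarrow> bool" where
  "is_opcomma A p c d0 d1 \<alpha> \<longleftrightarrow>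
     c \<in> obj A \<and> d0 \<in> hom A (cod1 A p) c \<and> d1 \<in> hom A (cod1 A p) c \<and>
     cell A \<alpha> (cmp1 A d1 p) (cmp1 A d0 p) \<and>
     (\<forall>y\<in>obj A.
        bij_betw (opc_obj_map A d0 d1 \<alpha>) (hom A c y) (opc_triples A p y) \<and>
        bij_betw (\<lambda>\<xi>. (opc_obj_map A d0 d1 \<alpha> (src2 A \<xi>), opc_obj_map A d0 d1 \<alpha> (tgt2 A \<xi>),
                        hcmp A \<xi> (idt2 A d0), hcmp A \<xi> (idt2 A d1)))
                 (cells A c y) (opc_morphs A p y))"

definition po_pairs :: "('o, 'a, 'c) tcat \<Rightarrow> 'a \<Rightarrow> 'a \<Rightarrow> 'o \<Rightarrow> ('a \<times> 'a) set" where
  "po_pairs A f0 f1 y = {(k0, k1). k0 \<in> hom A (cod1 A f0) y \<and> k1 \<in> hom A (cod1 A f1) y \<and>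
      cmp1 A k0 f0 = cmp1 A k1 f1}"

definition po_morphs :: "('o, 'a, 'c) tcat \<Rightarrow> 'a \<Rightarrow> 'a \<Rightarrow> 'o \<Rightarrow>
    (('a \<times> 'a) \<times> ('a \<times> 'a) \<times> 'c \<times> 'c) set" where
  "po_morphs A f0 f1 y = {((k0, k1), (k0', k1'), \<xi>0, \<xi>1).
      (k0, k1) \<in> po_pairs A f0 f1 y \<and> (k0', k1') \<in> po_pairs A f0 f1 y \<and>
      cell A \<xi>0 k0 k0' \<and> cell A \<xi>1 k1 k1' \<and>
      hcmp A \<xi>0 (idt2 A f0) = hcmp A \<xi>1 (idt2 A f1)}"

definition is_2pushout :: "('o, 'a, 'c) tcat \<Rightarrow> 'a \<Rightarrow> 'a \<Rightarrow> 'o \<Rightarrow> 'a \<Rightarrow> 'a \<Rightarrow> bool" where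
  "is_2pushout A f0 f1 P q0 q1 \<longleftrightarrow>
     f0 \<in> arr1 A \<and> f1 \<in> arr1 A \<and> dom1 A f0 = dom1 A f1 \<and> P \<in> obj A \<and>
     q0 \<in> hom A (cod1 A f0) P \<and> q1 \<in> hom A (cod1 A f1) P \<and> cmp1 A q0 f0 = cmp1 A q1 f1 \<and>
     (\<forall>y\<in>obj A.
        bij_betw (\<lambda>k. (cmp1 A k q0, cmp1 A k q1)) (hom A P y) (po_pairs A f0 f1 y) \<and>
        bij_betw (\<lambda>\<xi>. ((cmp1 A (src2 A \<xi>) q0, cmp1 A (src2 A \<xi>) q1),
                        (cmp1 A (tgt2 A \<xi>) q0, cmp1 A (tgt2 A \<xi>) q1),
                        hcmp A \<xi> (idt2 A q0), hcmp A \<xi> (idt2 A q1)))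
                 (cells A P y) (po_morphs A f0 f1 y))"

definition is_ran :: "('o, 'a, 'c) tcat \<Rightarrow> 'a \<Rightarrow> 'a \<Rightarrow> 'a \<Rightarrow> 'c \<Rightarrow> bool" where
  "is_ran A f g r \<gamma> \<longleftrightarrow>
     f \<in> arr1 A \<and> g \<in> arr1 A \<and> dom1 A f = dom1 A g \<and>
     r \<in> hom A (cod1 A g) (cod1 A f) \<and> cell A \<gamma> (cmp1 A r g) f \<and>
     (\<forall>k\<in>hom A (cod1 A g) (cod1 A f).
        bij_betw (\<lambda>\<beta>. vcmp A \<gamma> (hcmp A \<beta> (idt2 A g)))
          {\<beta>. cell A \<beta> k r} {\<beta>. cell A \<beta> (cmp1 A k g) f})"

definition preserves_ran :: "('o, 'a, 'c) tcat \<Rightarrow> 'a \<Rightarrow> 'a \<Rightarrow> 'a \<Rightarrow> 'a \<Rightarrow> 'c \<Rightarrow> bool" where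
  "preserves_ran A d f g r \<gamma> \<longleftrightarrow>
     is_ran A (cmp1 A d f) g (cmp1 A d r) (hcmp A (idt2 A d) \<gamma>)"

end

theory Submission
  imports Defs
begin

lemma ax0: "two_category A \<Longrightarrow> (\<forall>f\<in>arr1 A. dom1 A f \<in> obj A \<and> cod1 A f \<in> obj A)"
  unfolding two_category_def by (elim conjE) assumption

lemma ax1: "two_category A \<Longrightarrow> (\<forall>x\<in>obj A. idt1 A x \<in> arr1 A \<and> dom1 A (idt1 A x) = x \<and> cod1 A (idt1 A x) = x)"
  unfolding two_category_def by (elim conjE) assumption

lemma ax2: "two_category A \<Longrightarrow> (\<forall>g\<in>arr1 A. \<forall>f\<in>arr1 A. dom1 A g = cod1 A f \<longrightarrow>
        cmp1 A g f \<in> arr1 A \<and> dom1 A (cmp1 A g f) = dom1 A f \<and> cod1 A (cmp1 A g f) = cod1 A g)"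
  unfolding two_category_def by (elim conjE) assumption

lemma ax3: "two_category A \<Longrightarrow> (\<forall>h\<in>arr1 A. \<forall>g\<in>arr1 A. \<forall>f\<in>arr1 A. dom1 A h = cod1 A g \<and> dom1 A g = cod1 A f \<longrightarrow>
        cmp1 A h (cmp1 A g f) = cmp1 A (cmp1 A h g) f)"
  unfolding two_category_def by (elim conjE) assumption

lemma ax4: "two_category A \<Longrightarrow> (\<forall>f\<in>arr1 A. cmp1 A (idt1 A (cod1 A f)) f = f \<and> cmp1 A f (idt1 A (dom1 A f)) = f)"
  unfolding two_category_def by (elim conjE) assumption

lemma ax5: "two_category A \<Longrightarrow> (\<forall>a\<in>arr2 A. src2 A a \<in> arr1 A \<and> tgt2 A a \<in> arr1 A \<and>
        dom1 A (src2 A a) = dom1 A (tgt2 A a) \<and> cod1 A (src2 A a) = cod1 A (tgt2 A a))"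
  unfolding two_category_def by (elim conjE) assumption

lemma ax6: "two_category A \<Longrightarrow> (\<forall>f\<in>arr1 A. idt2 A f \<in> arr2 A \<and> src2 A (idt2 A f) = f \<and> tgt2 A (idt2 A f) = f)"
  unfolding two_category_def by (elim conjE) assumption

lemma ax7: "two_category A \<Longrightarrow> (\<forall>b\<in>arr2 A. \<forall>a\<in>arr2 A. src2 A b = tgt2 A a \<longrightarrow>
        vcmp A b a \<in> arr2 A \<and> src2 A (vcmp A b a) = src2 A a \<and> tgt2 A (vcmp A b a) = tgt2 A b)"
  unfolding two_category_def by (elim conjE) assumption

lemma ax8: "two_category A \<Longrightarrow> (\<forall>c\<in>arr2 A. \<forall>b\<in>arr2 A. \<forall>a\<in>arr2 A. src2 A c = tgt2 A b \<and> src2 A b = tgt2 A a \<longrightarrow>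
        vcmp A c (vcmp A b a) = vcmp A (vcmp A c b) a)"
  unfolding two_category_def by (elim conjE) assumption

lemma ax9: "two_category A \<Longrightarrow> (\<forall>a\<in>arr2 A. vcmp A (idt2 A (tgt2 A a)) a = a \<and> vcmp A a (idt2 A (src2 A a)) = a)"
  unfolding two_category_def by (elim conjE) assumption

lemma ax10: "two_category A \<Longrightarrow> (\<forall>b\<in>arr2 A. \<forall>a\<in>arr2 A. dom1 A (src2 A b) = cod1 A (src2 A a) \<longrightarrow>
        hcmp A b a \<in> arr2 A \<and> src2 A (hcmp A b a) = cmp1 A (src2 A b) (src2 A a) \<and>
        tgt2 A (hcmp A b a) = cmp1 A (tgt2 A b) (tgt2 A a))"
  unfolding two_category_def by (elim conjE) assumption

lemma ax11: "two_category A \<Longrightarrow> (\<forall>c\<in>arr2 A. \<forall>b\<in>arr2 A. \<forall>a\<in>arr2 A.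
        dom1 A (src2 A c) = cod1 A (src2 A b) \<and> dom1 A (src2 A b) = cod1 A (src2 A a) \<longrightarrow>
        hcmp A c (hcmp A b a) = hcmp A (hcmp A c b) a)"
  unfolding two_category_def by (elim conjE) assumption

lemma ax12: "two_category A \<Longrightarrow> (\<forall>a\<in>arr2 A. hcmp A (idt2 A (idt1 A (cod1 A (src2 A a)))) a = a \<and>
        hcmp A a (idt2 A (idt1 A (dom1 A (src2 A a)))) = a)"
  unfolding two_category_def by (elim conjE) assumption

lemma ax13: "two_category A \<Longrightarrow> (\<forall>g\<in>arr1 A. \<forall>f\<in>arr1 A. dom1 A g = cod1 A f \<longrightarrow>
        hcmp A (idt2 A g) (idt2 A f) = idt2 A (cmp1 A g f))"
  unfolding two_category_def by (elim conjE) assumption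

lemma ax14: "two_category A \<Longrightarrow> (\<forall>d\<in>arr2 A. \<forall>c\<in>arr2 A. \<forall>b\<in>arr2 A. \<forall>a\<in>arr2 A.
        src2 A d = tgt2 A c \<and> src2 A b = tgt2 A a \<and> dom1 A (src2 A d) = cod1 A (src2 A b) \<longrightarrow>
        hcmp A (vcmp A d c) (vcmp A b a) = vcmp A (hcmp A d b) (hcmp A c a))"
  unfolding two_category_def by (elim conjE) assumption


lemma tc_assoc1:
  assumes A: "two_category A" and "h \<in> arr1 A" "g \<in> arr1 A" "f \<in> arr1 A" "dom1 A h = cod1 A g" "dom1 A g = cod1 A f"
  shows "cmp1 A h (cmp1 A g f) = cmp1 A (cmp1 A h g) f"
  using ax3[OF A] assms(2-) by blast
lemma tc_vunit:
  assumes A: "two_category A" and "a \<in> arr2 A"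
  shows "vcmp A (idt2 A (tgt2 A a)) a = a" "vcmp A a (idt2 A (src2 A a)) = a"
  using ax9[OF A] assms(2) by blast+
lemma tc_hassoc:
  assumes A: "two_category A" and "c \<in> arr2 A" "b \<in> arr2 A" "a \<in> arr2 A"
     "dom1 A (src2 A c) = cod1 A (src2 A b)" "dom1 A (src2 A b) = cod1 A (src2 A a)"
  shows "hcmp A c (hcmp A b a) = hcmp A (hcmp A c b) a"
  using ax11[OF A] assms(2-) by blast
lemma tc_idcomp:
  assumes A: "two_category A" and "g \<in> arr1 A" "f \<in> arr1 A" "dom1 A g = cod1 A f"
  shows "hcmp A (idt2 A g) (idt2 A f) = idt2 A (cmp1 A g f)"
  using ax13[OF A] assms(2-) by blast
lemma tc_cmpid:
  assumes A: "two_category A" and "f \<in> arr1 A"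
  shows "cmp1 A (idt1 A (cod1 A f)) f = f" "cmp1 A f (idt1 A (dom1 A f)) = f"
  using ax4[OF A] assms(2) by blast+
lemma tc_interchange:
  assumes A: "two_category A" and "d \<in> arr2 A" "c \<in> arr2 A" "b \<in> arr2 A" "a \<in> arr2 A"
    "src2 A d = tgt2 A c" "src2 A b = tgt2 A a" "dom1 A (src2 A d) = cod1 A (src2 A b)"
  shows "hcmp A (vcmp A d c) (vcmp A b a) = vcmp A (hcmp A d b) (hcmp A c a)"
  using ax14[OF A] assms(2-) by blast
lemma tc_hcmp:
  assumes A: "two_category A" and "b \<in> arr2 A" "a \<in> arr2 A" "dom1 A (src2 A b) = cod1 A (src2 A a)"
  shows "hcmp A b a \<in> arr2 A \<and> src2 A (hcmp A b a) = cmp1 A (src2 A b) (src2 A a) \<and>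
        tgt2 A (hcmp A b a) = cmp1 A (tgt2 A b) (tgt2 A a)"
  using ax10[OF A] assms(2-) by blast
lemma tc_cmp:
  assumes A: "two_category A" and "g \<in> arr1 A" "f \<in> arr1 A" "dom1 A g = cod1 A f"
  shows "cmp1 A g f \<in> arr1 A \<and> dom1 A (cmp1 A g f) = dom1 A f \<and> cod1 A (cmp1 A g f) = cod1 A g"
  using ax2[OF A] assms(2-) by blast
lemma tc_idt2:
  assumes A: "two_category A" and "f \<in> arr1 A"
  shows "idt2 A f \<in> arr2 A \<and> src2 A (idt2 A f) = f \<and> tgt2 A (idt2 A f) = f"
  using ax6[OF A] assms(2) by blast
lemma tc_idt1:
  assumes A: "two_category A" and "x \<in> obj A"
  shows "idt1 A x \<in> arr1 A \<and> dom1 A (idt1 A x) = x \<and> cod1 A (idt1 A x) = x"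
  using ax1[OF A] assms(2) by blast
lemma tc_obj:
  assumes A: "two_category A" and "f \<in> arr1 A"
  shows "dom1 A f \<in> obj A" "cod1 A f \<in> obj A"
  using ax0[OF A] assms(2) by blast+
lemma tc_whisk:
  assumes A: "two_category A" and g: "g \<in> arr1 A" and f: "f \<in> arr1 A" and gf: "dom1 A g = cod1 A f"
    and a: "a \<in> arr2 A" and fa: "dom1 A f = cod1 A (src2 A a)"
  shows "hcmp A (idt2 A (cmp1 A g f)) a = hcmp A (idt2 A g) (hcmp A (idt2 A f) a)"
proof -
  have i: "idt2 A g \<in> arr2 A" "idt2 A f \<in> arr2 A" "src2 A (idt2 A g) = g" "src2 A (idt2 A f) = f"
    using tc_idt2[OF A g] tc_idt2[OF A f] by auto
  show ?thesis using tc_idcomp[OF A g f gf, symmetric] tc_hassoc[OF A i(1,2) a] i gf fa by simp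
qed
lemma tc_vassoc:
  assumes A: "two_category A" and "c \<in> arr2 A" "b \<in> arr2 A" "a \<in> arr2 A" "src2 A c = tgt2 A b" "src2 A b = tgt2 A a"
  shows "vcmp A c (vcmp A b a) = vcmp A (vcmp A c b) a"
  using ax8[OF A] assms(2-) by blast
lemma tc_vid:
  assumes A: "two_category A" and "f \<in> arr1 A"
  shows "vcmp A (idt2 A f) (idt2 A f) = idt2 A f"
  using tc_vunit[OF A, of "idt2 A f"] tc_idt2[OF A assms(2)] by auto
lemma tc_vidl:
  assumes A: "two_category A" and "cell A a f g"
  shows "vcmp A (idt2 A g) a = a"
  using tc_vunit[OF A, of a] assms(2) by (auto simp: cell_def)

theorem lemma4p6:
  fixes A :: "('o, 'a, 'c) tcat"
    and p :: 'a
    and c :: 'o and d0 d1 :: 'a and \<alpha> :: 'c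
    and P :: 'o and D0 D1 D2 s0 :: 'a
    and t :: 'a and \<gamma> :: 'c and m \<eta> :: 'c
    and l lb :: 'a
  assumes A: "two_category A"
    and p: "p \<in> arr1 A"
    \<comment> \<open>two-dimensional cokernel diagram of p\<close>
    and opc: "is_opcomma A p c d0 d1 \<alpha>"
    and po: "is_2pushout A d0 d1 P D2 D0"
    and D1: "D1 \<in> hom A c P" "cmp1 A D1 d1 = cmp1 A D2 d1" "cmp1 A D1 d0 = cmp1 A D0 d0"
      "hcmp A (idt2 A D1) \<alpha> = vcmp A (hcmp A (idt2 A D0) \<alpha>) (hcmp A (idt2 A D2) \<alpha>)"
    and s0: "s0 \<in> hom A c (cod1 A p)" "cmp1 A s0 d0 = idt1 A (cod1 A p)"
      "cmp1 A s0 d1 = idt1 A (cod1 A p)" "hcmp A (idt2 A s0) \<alpha> = idt2 A p"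
    \<comment> \<open>right Kan extension of p along p, preserved by d0\<close>
    and ran: "is_ran A p p t \<gamma>"
    and pres: "preserves_ran A d0 p p t \<gamma>"
    \<comment> \<open>codensity monad\<close>
    and m: "cell A m (cmp1 A t t) t"
      "vcmp A \<gamma> (hcmp A m (idt2 A p)) = vcmp A \<gamma> (hcmp A (idt2 A t) \<gamma>)"
    and \<eta>: "cell A \<eta> (idt1 A (cod1 A p)) t"
      "vcmp A \<gamma> (hcmp A \<eta> (idt2 A p)) = idt2 A p"
    \<comment> \<open>the 1-cells l and l-bar\<close>
    and l: "l \<in> hom A c (cod1 A p)" "cmp1 A l d0 = idt1 A (cod1 A p)" "cmp1 A l d1 = t"
      "hcmp A (idt2 A l) \<alpha> = \<gamma>"
    and lb: "lb \<in> hom A P (cod1 A p)" "cmp1 A lb D0 = l" "cmp1 A lb D2 = cmp1 A t l"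
  shows "\<exists>\<theta> lam. cell A \<theta> s0 l \<and> cell A lam (cmp1 A lb D1) l \<and>
           hcmp A \<theta> (idt2 A d1) = \<eta> \<and> hcmp A \<theta> (idt2 A d0) = idt2 A (idt1 A (cod1 A p)) \<and>
           hcmp A lam (idt2 A d1) = m \<and> hcmp A lam (idt2 A d0) = idt2 A (idt1 A (cod1 A p))"
proof -
  define b where "b = cod1 A p"
  define e where "e = dom1 A p"
  have bo: "b \<in> obj A" and eo: "e \<in> obj A" using tc_obj[OF A p] b_def e_def by auto
  have ib: "idt1 A b \<in> arr1 A" "dom1 A (idt1 A b) = b" "cod1 A (idt1 A b) = b" using tc_idt1[OF A bo] by auto
  have co: "c \<in> obj A" and d0: "d0 \<in> arr1 A" "dom1 A d0 = b" "cod1 A d0 = c"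
    and d1: "d1 \<in> arr1 A" "dom1 A d1 = b" "cod1 A d1 = c"
    and al: "cell A \<alpha> (cmp1 A d1 p) (cmp1 A d0 p)"
    and bij: "\<And>y. y \<in> obj A \<Longrightarrow> bij_betw (opc_obj_map A d0 d1 \<alpha>) (hom A c y) (opc_triples A p y) \<and>
        bij_betw (\<lambda>\<xi>. (opc_obj_map A d0 d1 \<alpha> (src2 A \<xi>), opc_obj_map A d0 d1 \<alpha> (tgt2 A \<xi>),
                        hcmp A \<xi> (idt2 A d0), hcmp A \<xi> (idt2 A d1)))
                 (cells A c y) (opc_morphs A p y)"
    using opc unfolding is_opcomma_def b_def by (auto simp: hom_def)
  have d1p: "cmp1 A d1 p \<in> arr1 A" "dom1 A (cmp1 A d1 p) = e" "cod1 A (cmp1 A d1 p) = c"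
    using tc_cmp[OF A d1(1) p] d1 b_def e_def by auto
  have alA: "\<alpha> \<in> arr2 A" "src2 A \<alpha> = cmp1 A d1 p" "tgt2 A \<alpha> = cmp1 A d0 p" using al by (auto simp: cell_def)
  have Po: "P \<in> obj A" and D2: "D2 \<in> arr1 A" "dom1 A D2 = c" "cod1 A D2 = P"
    and D0: "D0 \<in> arr1 A" "dom1 A D0 = c" "cod1 A D0 = P"
    using po d0 d1 unfolding is_2pushout_def by (auto simp: hom_def)
  have D1': "D1 \<in> arr1 A" "dom1 A D1 = c" "cod1 A D1 = P" using D1(1) by (auto simp: hom_def)
  have s0': "s0 \<in> arr1 A" "dom1 A s0 = c" "cod1 A s0 = b" using s0(1) b_def by (auto simp: hom_def)
  have l': "l \<in> arr1 A" "dom1 A l = c" "cod1 A l = b" using l(1) b_def by (auto simp: hom_def)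
  have lb': "lb \<in> arr1 A" "dom1 A lb = P" "cod1 A lb = b" using lb(1) b_def by (auto simp: hom_def)
  have t': "t \<in> arr1 A" "dom1 A t = b" "cod1 A t = b" using ran unfolding is_ran_def b_def by (auto simp: hom_def)
  have gam: "\<gamma> \<in> arr2 A" "src2 A \<gamma> = cmp1 A t p" "tgt2 A \<gamma> = p" using ran unfolding is_ran_def by (auto simp: cell_def)
  have bj: "bij_betw (opc_obj_map A d0 d1 \<alpha>) (hom A c b) (opc_triples A p b)"
    and bj2: "bij_betw (\<lambda>\<xi>. (opc_obj_map A d0 d1 \<alpha> (src2 A \<xi>), opc_obj_map A d0 d1 \<alpha> (tgt2 A \<xi>),
                        hcmp A \<xi> (idt2 A d0), hcmp A \<xi> (idt2 A d1)))
                 (cells A c b) (opc_morphs A p b)" using bij[OF bo] by auto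
  have idp: "idt2 A p \<in> arr2 A" "src2 A (idt2 A p) = p" "tgt2 A (idt2 A p) = p" using tc_idt2[OF A p] by auto
  have idib: "idt2 A (idt1 A b) \<in> arr2 A" "src2 A (idt2 A (idt1 A b)) = idt1 A b" "tgt2 A (idt2 A (idt1 A b)) = idt1 A b"
    using tc_idt2[OF A ib(1)] by auto
  have ibp: "cmp1 A (idt1 A b) p = p" using tc_cmpid[OF A p] b_def by simp
  have hidp: "hcmp A (idt2 A (idt1 A b)) (idt2 A p) = idt2 A p"
    using tc_idcomp[OF A ib(1) p] ib ibp b_def by simp
  have key: "\<And>h g \<xi>0 \<xi>1. h \<in> hom A c b \<Longrightarrow> g \<in> hom A c b \<Longrightarrow>
      cell A \<xi>0 (cmp1 A h d0) (cmp1 A g d0) \<Longrightarrow> cell A \<xi>1 (cmp1 A h d1) (cmp1 A g d1) \<Longrightarrow>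
      vcmp A (hcmp A \<xi>0 (idt2 A p)) (hcmp A (idt2 A h) \<alpha>) = vcmp A (hcmp A (idt2 A g) \<alpha>) (hcmp A \<xi>1 (idt2 A p)) \<Longrightarrow>
      \<exists>\<xi>. cell A \<xi> h g \<and> hcmp A \<xi> (idt2 A d0) = \<xi>0 \<and> hcmp A \<xi> (idt2 A d1) = \<xi>1"
  proof -
    fix h g \<xi>0 \<xi>1
    assume h: "h \<in> hom A c b" and g: "g \<in> hom A c b" and c0: "cell A \<xi>0 (cmp1 A h d0) (cmp1 A g d0)"
      and c1: "cell A \<xi>1 (cmp1 A h d1) (cmp1 A g d1)"
      and eq: "vcmp A (hcmp A \<xi>0 (idt2 A p)) (hcmp A (idt2 A h) \<alpha>) = vcmp A (hcmp A (idt2 A g) \<alpha>) (hcmp A \<xi>1 (idt2 A p))"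
    have th: "opc_obj_map A d0 d1 \<alpha> h \<in> opc_triples A p b" using bj h bij_betw_apply by fast
    have tg: "opc_obj_map A d0 d1 \<alpha> g \<in> opc_triples A p b" using bj g bij_betw_apply by fast
    have "(opc_obj_map A d0 d1 \<alpha> h, opc_obj_map A d0 d1 \<alpha> g, \<xi>0, \<xi>1) \<in> opc_morphs A p b"
      using th tg c0 c1 eq unfolding opc_morphs_def opc_obj_map_def by auto
    then obtain \<xi> where xi: "\<xi> \<in> cells A c b" and ev: "(opc_obj_map A d0 d1 \<alpha> (src2 A \<xi>), opc_obj_map A d0 d1 \<alpha> (tgt2 A \<xi>),
                        hcmp A \<xi> (idt2 A d0), hcmp A \<xi> (idt2 A d1)) = (opc_obj_map A d0 d1 \<alpha> h, opc_obj_map A d0 d1 \<alpha> g, \<xi>0, \<xi>1)"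
      using bj2 unfolding bij_betw_def by (metis (no_types, lifting) imageE)
    have "src2 A \<xi> \<in> hom A c b" "tgt2 A \<xi> \<in> hom A c b" using xi by (auto simp: cells_def)
    then have "src2 A \<xi> = h" "tgt2 A \<xi> = g" using ev h g bj unfolding bij_betw_def inj_on_def by auto
    then show "\<exists>\<xi>. cell A \<xi> h g \<and> hcmp A \<xi> (idt2 A d0) = \<xi>0 \<and> hcmp A \<xi> (idt2 A d1) = \<xi>1"
      using xi ev unfolding cell_def cells_def by auto
  qed
  have "\<exists>\<theta>. cell A \<theta> s0 l \<and> hcmp A \<theta> (idt2 A d0) = idt2 A (idt1 A b) \<and> hcmp A \<theta> (idt2 A d1) = \<eta>"
  proof (rule key)
    show "s0 \<in> hom A c b" "l \<in> hom A c b" using s0 l b_def by auto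
    show "cell A (idt2 A (idt1 A b)) (cmp1 A s0 d0) (cmp1 A l d0)" using s0 l idib b_def by (auto simp: cell_def)
    show "cell A \<eta> (cmp1 A s0 d1) (cmp1 A l d1)" using s0 l \<eta> b_def by auto
    have "vcmp A (hcmp A (idt2 A (idt1 A b)) (idt2 A p)) (hcmp A (idt2 A s0) \<alpha>) = idt2 A p"
      using hidp s0(4) tc_vid[OF A p] by simp
    also have "\<dots> = vcmp A (hcmp A (idt2 A l) \<alpha>) (hcmp A \<eta> (idt2 A p))" using l(4) \<eta>(2) by simp
    finally show "vcmp A (hcmp A (idt2 A (idt1 A b)) (idt2 A p)) (hcmp A (idt2 A s0) \<alpha>) =
      vcmp A (hcmp A (idt2 A l) \<alpha>) (hcmp A \<eta> (idt2 A p))" .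
  qed
  then obtain \<theta> where th: "cell A \<theta> s0 l" "hcmp A \<theta> (idt2 A d0) = idt2 A (idt1 A b)" "hcmp A \<theta> (idt2 A d1) = \<eta>" by blast
  have lbD1: "cmp1 A lb D1 \<in> hom A c b" using tc_cmp[OF A lb'(1) D1'(1)] lb' D1' by (auto simp: hom_def)
  have e1: "cmp1 A (cmp1 A lb D1) d0 = idt1 A b"
    using tc_assoc1[OF A lb'(1) D1'(1) d0(1)] tc_assoc1[OF A lb'(1) D0(1) d0(1)] lb' D1' d0 D0 D1(3) lb(2) l(2) b_def by simp
  have e2: "cmp1 A (cmp1 A lb D1) d1 = cmp1 A t t"
  proof -
    have "cmp1 A (cmp1 A lb D1) d1 = cmp1 A lb (cmp1 A D2 d1)"
      using tc_assoc1[OF A lb'(1) D1'(1) d1(1)] lb' D1' d1 D1(2) by simp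
    also have "\<dots> = cmp1 A (cmp1 A t l) d1" using A lb' D2 d1 lb(3) tc_assoc1[OF A lb'(1) D2(1) d1(1)] by simp
    also have "\<dots> = cmp1 A t t" using A t' l' d1 l(3) tc_assoc1[OF A t'(1) l'(1) d1(1)] by simp
    finally show ?thesis .
  qed
  have D0al: "hcmp A (idt2 A D0) \<alpha> \<in> arr2 A \<and> src2 A (hcmp A (idt2 A D0) \<alpha>) = cmp1 A D0 (cmp1 A d1 p) \<and>
        tgt2 A (hcmp A (idt2 A D0) \<alpha>) = cmp1 A D0 (cmp1 A d0 p)"
    using tc_hcmp[OF A _ alA(1)] tc_idt2[OF A D0(1)] alA d1p D0 by auto
  have D2al: "hcmp A (idt2 A D2) \<alpha> \<in> arr2 A \<and> src2 A (hcmp A (idt2 A D2) \<alpha>) = cmp1 A D2 (cmp1 A d1 p) \<and>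
        tgt2 A (hcmp A (idt2 A D2) \<alpha>) = cmp1 A D2 (cmp1 A d0 p)"
    using tc_hcmp[OF A _ alA(1)] tc_idt2[OF A D2(1)] alA d1p D2 by auto
  have lbD0: "hcmp A (idt2 A lb) (hcmp A (idt2 A D0) \<alpha>) = \<gamma>"
    using tc_whisk[OF A lb'(1) D0(1) _ alA(1)] lb' D0 d1p alA lb(2) l(4) by simp
  have lbD2: "hcmp A (idt2 A lb) (hcmp A (idt2 A D2) \<alpha>) = hcmp A (idt2 A t) \<gamma>"
  proof -
    have "hcmp A (idt2 A lb) (hcmp A (idt2 A D2) \<alpha>) = hcmp A (idt2 A (cmp1 A t l)) \<alpha>"
      using tc_whisk[OF A lb'(1) D2(1) _ alA(1)] lb' D2 d1p alA lb(3) by simp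
    also have "\<dots> = hcmp A (idt2 A t) \<gamma>"
      using tc_whisk[OF A t'(1) l'(1) _ alA(1)] t' l' d1p alA l(4) by simp
    finally show ?thesis .
  qed
  have D0D2: "src2 A (hcmp A (idt2 A D0) \<alpha>) = tgt2 A (hcmp A (idt2 A D2) \<alpha>)"
  proof -
    have "cmp1 A D2 d0 = cmp1 A D0 d1" using po unfolding is_2pushout_def by blast
    then show ?thesis using D0al D2al tc_assoc1[OF A D2(1) d0(1) p] tc_assoc1[OF A D0(1) d1(1) p] D0 D2 d0 d1 b_def by simp
  qed
  have e3: "hcmp A (idt2 A (cmp1 A lb D1)) \<alpha> = vcmp A \<gamma> (hcmp A (idt2 A t) \<gamma>)"
  proof -
    have "hcmp A (idt2 A (cmp1 A lb D1)) \<alpha> = hcmp A (idt2 A lb) (hcmp A (idt2 A D1) \<alpha>)"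
      using tc_whisk[OF A lb'(1) D1'(1) _ alA(1)] lb' D1' d1p alA by simp
    also have "\<dots> = hcmp A (vcmp A (idt2 A lb) (idt2 A lb)) (vcmp A (hcmp A (idt2 A D0) \<alpha>) (hcmp A (idt2 A D2) \<alpha>))"
      using D1(4) tc_vid[OF A lb'(1)] by simp
    also have "\<dots> = vcmp A (hcmp A (idt2 A lb) (hcmp A (idt2 A D0) \<alpha>)) (hcmp A (idt2 A lb) (hcmp A (idt2 A D2) \<alpha>))"
      by (rule tc_interchange[OF A]) (use tc_idt2[OF A lb'(1)] D0al D2al D0D2 lb' D0 d1p tc_cmp[OF A D0(1) d1p(1)] in auto)
    finally show ?thesis using lbD0 lbD2 by simp
  qed
  have "\<exists>\<theta>. cell A \<theta> (cmp1 A lb D1) l \<and> hcmp A \<theta> (idt2 A d0) = idt2 A (idt1 A b) \<and> hcmp A \<theta> (idt2 A d1) = m"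
  proof (rule key)
    show "cmp1 A lb D1 \<in> hom A c b" "l \<in> hom A c b" using lbD1 l b_def by auto
    show "cell A (idt2 A (idt1 A b)) (cmp1 A (cmp1 A lb D1) d0) (cmp1 A l d0)" using e1 l idib b_def by (auto simp: cell_def)
    show "cell A m (cmp1 A (cmp1 A lb D1) d1) (cmp1 A l d1)" using e2 l m by auto
    have "vcmp A (hcmp A (idt2 A (idt1 A b)) (idt2 A p)) (hcmp A (idt2 A (cmp1 A lb D1)) \<alpha>) = vcmp A \<gamma> (hcmp A (idt2 A t) \<gamma>)"
    proof -
      have Y: "hcmp A (idt2 A t) \<gamma> \<in> arr2 A \<and> src2 A (hcmp A (idt2 A t) \<gamma>) = cmp1 A t (cmp1 A t p) \<and> tgt2 A (hcmp A (idt2 A t) \<gamma>) = cmp1 A t p"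
        using tc_hcmp[OF A _ gam(1)] tc_idt2[OF A t'(1)] gam t' tc_cmp[OF A t'(1) p] b_def by auto
      have "vcmp A (idt2 A p) (vcmp A \<gamma> (hcmp A (idt2 A t) \<gamma>)) = vcmp A (vcmp A (idt2 A p) \<gamma>) (hcmp A (idt2 A t) \<gamma>)"
        using tc_vassoc[OF A idp(1) gam(1)] Y idp gam by simp
      also have "vcmp A (idt2 A p) \<gamma> = \<gamma>" using tc_vunit(1)[OF A gam(1)] gam by simp
      finally show ?thesis using hidp e3 by simp
    qed
    also have "\<dots> = vcmp A (hcmp A (idt2 A l) \<alpha>) (hcmp A m (idt2 A p))" using l(4) m(2) by simp
    finally show "vcmp A (hcmp A (idt2 A (idt1 A b)) (idt2 A p)) (hcmp A (idt2 A (cmp1 A lb D1)) \<alpha>) =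
      vcmp A (hcmp A (idt2 A l) \<alpha>) (hcmp A m (idt2 A p))" .
  qed
  then obtain lam where la: "cell A lam (cmp1 A lb D1) l" "hcmp A lam (idt2 A d0) = idt2 A (idt1 A b)" "hcmp A lam (idt2 A d1) = m" by blast
  show ?thesis using th la b_def by blast
qed

end
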